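(* Let $M=\{D(c_i;r_i)\subset\mathbb R^d: r_i>0,\ 1\le i\le m\}$ be a finite set of closed balls in $\mathbb R^d$ such that $D(c_i;r_i)\cap D(c_j;r_j)\ne\emptyset$ for every pair $i,j$. Then $$\bigcap_{i=1}^m D\!\left(c_i;\sqrt{\tfrac{2d}{d+1}}\,r_i\right)\neq\emptyset.$$
   Context: $D(c;r)=\{x\in\mathbb R^d:\|x-c\|\le r\}$ denotes the closed Euclidean ball. The radii $r_i$ may differ from one another. *)

theory Defs
  imports "HOL-Analysis.Analysis"
begin

end

theory Submission
  imports Defs "HOL-Analysis.Analysis"
begin

lemma dsum3:
  fixes f1 g1 f2 g2 f3 g3 :: "'b \<Rightarrow> real"
  shows "(\<Sum>i\<in>J. \<Sum>j\<in>J. f1 i * g1 j + f2 i * g2 j + f3 i * g3 j) =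
     sum f1 J * sum g1 J + sum f2 J * sum g2 J + sum f3 J * sum g3 J"
  by (simp add: sum.distrib sum_product)

lemma jung_alg:
  fixes u :: "nat \<Rightarrow> 'a::real_inner" and \<beta> r :: "nat \<Rightarrow> real"
  assumes fin: "finite J" and ne: "J \<noteq> {}" and bpos: "\<forall>j\<in>J. \<beta> j \<ge> 0" and rpos: "\<forall>j\<in>J. r j > 0"
   and S1: "(\<Sum>j\<in>J. \<beta> j * (r j)^2) = 1"
   and U0: "(\<Sum>j\<in>J. \<beta> j *\<^sub>R u j) = 0"
   and nu: "\<forall>j\<in>J. norm (u j) = l * r j"
   and pw: "\<forall>i\<in>J. \<forall>j\<in>J. i \<noteq> j \<longrightarrow> norm (u i - u j) \<le> r i + r j"
  shows "real (card J) * l^2 \<le> 2 * real (card J) - 2"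
proof -
  define B where "B = (\<Sum>j\<in>J. \<beta> j)"
  define P where "P = (\<Sum>j\<in>J. \<beta> j * r j)"
  define T where "T = (\<Sum>j\<in>J. (\<beta> j * r j)^2)"
  define k where "k = real (card J)"
  have k1: "k \<ge> 1" using fin ne unfolding k_def by (simp add: Suc_leI card_gt_0_iff)
  have E0: "(\<Sum>i\<in>J. \<Sum>j\<in>J. \<beta> i * \<beta> j * (u i \<bullet> u j)) = 0"
  proof -
    have "(\<Sum>i\<in>J. \<Sum>j\<in>J. \<beta> i * \<beta> j * (u i \<bullet> u j)) = (\<Sum>j\<in>J. \<beta> j *\<^sub>R u j) \<bullet> (\<Sum>j\<in>J. \<beta> j *\<^sub>R u j)"
      by (simp add: inner_sum_left inner_sum_right sum_distrib_left mult.assoc, subst sum.swap, simp add: mult.left_commute)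
    then show ?thesis using U0 by simp
  qed
  have E1: "(\<Sum>i\<in>J. \<Sum>j\<in>J. \<beta> i * \<beta> j * (norm (u i - u j))^2) = 2 * l^2 * B"
  proof -
    have "(\<Sum>i\<in>J. \<Sum>j\<in>J. \<beta> i * \<beta> j * (norm (u i - u j))^2)
        = (\<Sum>i\<in>J. \<Sum>j\<in>J. (l^2 * (\<beta> i * (r i)^2)) * \<beta> j + \<beta> i * (l^2 * (\<beta> j * (r j)^2)) + (-2 * \<beta> i) * (\<beta> j * (u i \<bullet> u j)))"
    proof (intro sum.cong refl)
      fix i j assume i: "i \<in> J" and j: "j \<in> J"
      have "(norm (u i - u j))^2 = (norm (u i))^2 + (norm (u j))^2 - 2 * (u i \<bullet> u j)"
        by (simp add: power2_norm_eq_inner inner_diff_left inner_diff_right inner_commute)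
      also have "\<dots> = l^2 * (r i)^2 + l^2 * (r j)^2 - 2 * (u i \<bullet> u j)"
        using nu i j by (simp add: power_mult_distrib)
      finally have eq: "(norm (u i - u j))^2 = l^2 * (r i)^2 + l^2 * (r j)^2 - 2 * (u i \<bullet> u j)" .
      show "\<beta> i * \<beta> j * (norm (u i - u j))^2 = (l^2 * (\<beta> i * (r i)^2)) * \<beta> j + \<beta> i * (l^2 * (\<beta> j * (r j)^2)) + (-2 * \<beta> i) * (\<beta> j * (u i \<bullet> u j))"
        unfolding eq by (simp add: algebra_simps)
    qed
    also have "\<dots> = (\<Sum>i\<in>J. l^2 * (\<beta> i * (r i)^2)) * B + B * (\<Sum>j\<in>J. l^2 * (\<beta> j * (r j)^2))
        + (\<Sum>i\<in>J. \<Sum>j\<in>J. (-2 * \<beta> i) * (\<beta> j * (u i \<bullet> u j)))"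
      unfolding sum.distrib by (simp add: sum_product B_def)
    also have "(\<Sum>i\<in>J. \<Sum>j\<in>J. (-2 * \<beta> i) * (\<beta> j * (u i \<bullet> u j))) = -2 * (\<Sum>i\<in>J. \<Sum>j\<in>J. \<beta> i * \<beta> j * (u i \<bullet> u j))"
      by (simp add: sum_distrib_left mult.assoc)
    also have "(\<Sum>i\<in>J. l^2 * (\<beta> i * (r i)^2)) = l^2"
      using S1 by (simp add: sum_distrib_left[symmetric])
    finally show ?thesis using E0 by simp
  qed
  have E2: "(\<Sum>i\<in>J. \<Sum>j\<in>J. \<beta> i * \<beta> j * (norm (u i - u j))^2)
      \<le> (\<Sum>i\<in>J. \<Sum>j\<in>J. \<beta> i * \<beta> j * ((r i + r j)^2 - (if i = j then 4 * (r i)^2 else 0)))"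
  proof (intro sum_mono)
    fix i j assume i: "i \<in> J" and j: "j \<in> J"
    have bb: "\<beta> i * \<beta> j \<ge> 0" using bpos i j by simp
    show "\<beta> i * \<beta> j * (norm (u i - u j))^2 \<le> \<beta> i * \<beta> j * ((r i + r j)^2 - (if i = j then 4 * (r i)^2 else 0))"
    proof (cases "i = j")
      case True then show ?thesis by (simp add: power2_eq_square algebra_simps)
    next
      case False
      have "(norm (u i - u j))^2 \<le> (r i + r j)^2"
        using pw i j False by (intro power_mono) auto
      then show ?thesis using False bb by (simp add: mult_left_mono)
    qed
  qed
  have E3: "(\<Sum>i\<in>J. \<Sum>j\<in>J. \<beta> i * \<beta> j * ((r i + r j)^2 - (if i = j then 4 * (r i)^2 else 0))) = 2 * B + 2 * P^2 - 4 * T"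
  proof -
    have "(\<Sum>i\<in>J. \<Sum>j\<in>J. \<beta> i * \<beta> j * ((r i + r j)^2 - (if i = j then 4 * (r i)^2 else 0)))
       = (\<Sum>i\<in>J. \<Sum>j\<in>J. (\<beta> i * (r i)^2) * \<beta> j + (2 * \<beta> i * r i) * (\<beta> j * r j) + \<beta> i * (\<beta> j * (r j)^2))
         - (\<Sum>i\<in>J. \<Sum>j\<in>J. (if i = j then 4 * (\<beta> i * r i)^2 else 0))"
      by (simp add: sum_subtractf[symmetric] power2_eq_square algebra_simps if_distrib cong: if_cong)
    also have "(\<Sum>i\<in>J. \<Sum>j\<in>J. (if i = j then 4 * (\<beta> i * r i)^2 else 0)) = 4 * T"
      using fin by (simp add: T_def sum_distrib_left)
    also have "(\<Sum>i\<in>J. \<Sum>j\<in>J. (\<beta> i * (r i)^2) * \<beta> j + (2 * \<beta> i * r i) * (\<beta> j * r j) + \<beta> i * (\<beta> j * (r j)^2))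
        = 1 * B + (2 * P) * P + B * 1"
      unfolding dsum3 using S1 by (simp add: B_def P_def sum_distrib_left[symmetric] sum_negf mult.assoc)
    finally show ?thesis by (simp add: power2_eq_square)
  qed
  have E4: "P^2 \<le> B"
  proof -
    have "0 \<le> (\<Sum>i\<in>J. \<Sum>j\<in>J. \<beta> i * \<beta> j * (r i - r j)^2)"
      using bpos by (intro sum_nonneg) auto
    also have "\<dots> = (\<Sum>i\<in>J. \<Sum>j\<in>J. (\<beta> i * (r i)^2) * \<beta> j + (-2 * \<beta> i * r i) * (\<beta> j * r j) + \<beta> i * (\<beta> j * (r j)^2))"
      by (intro sum.cong refl) (simp add: power2_eq_square algebra_simps)
    also have "\<dots> = 1 * B + (-2 * P) * P + B * 1"
      unfolding dsum3 using S1 by (simp add: B_def P_def sum_distrib_left[symmetric] sum_negf mult.assoc)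
    finally show ?thesis by (simp add: power2_eq_square)
  qed
  have E5: "P^2 \<le> k * T"
  proof -
    have "0 \<le> (\<Sum>i\<in>J. \<Sum>j\<in>J. (\<beta> i * r i - \<beta> j * r j)^2)"
      by (intro sum_nonneg) auto
    also have "\<dots> = (\<Sum>i\<in>J. \<Sum>j\<in>J. ((\<beta> i * r i)^2) * 1 + (-2 * \<beta> i * r i) * (\<beta> j * r j) + 1 * ((\<beta> j * r j)^2))"
      by (intro sum.cong refl) (simp add: power2_eq_square algebra_simps)
    also have "\<dots> = T * k + (-2 * P) * P + k * T"
      unfolding dsum3 by (simp add: T_def P_def k_def sum_distrib_left[symmetric] sum_negf mult.assoc)
    finally show ?thesis by (simp add: power2_eq_square algebra_simps)
  qed
  have E6: "(k - 2) * P^2 \<le> (k - 2) * B"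
  proof (cases "k \<ge> 2")
    case True then show ?thesis using E4 by (intro mult_left_mono) auto
  next
    case False
    then have "card J = 1" using k1 unfolding k_def by linarith
    then obtain j where J: "J = {j}" by (auto simp: card_Suc_eq)
    have "P^2 = B" using S1 unfolding J P_def B_def by (simp add: power2_eq_square algebra_simps)
    then show ?thesis by simp
  qed
  have Bpos: "B > 0"
  proof -
    have "B \<ge> 0" unfolding B_def using bpos by (intro sum_nonneg) auto
    moreover have "B \<noteq> 0"
    proof
      assume "B = 0"
      then have "\<forall>j\<in>J. \<beta> j = 0" using bpos fin unfolding B_def by (subst (asm) sum_nonneg_eq_0_iff) auto
      then show False using S1 by simp
    qed
    ultimately show ?thesis by simp
  qed
  have "l^2 * B \<le> B + P^2 - 2 * T" using E1 E2 E3 by linarith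
  then have "k * (l^2 * B) \<le> k * (B + P^2 - 2 * T)" using k1 by (intro mult_left_mono) auto
  also have "\<dots> \<le> (2 * k - 2) * B" using E5 E6 by (simp add: algebra_simps)
  finally have "(k * l^2) * B \<le> (2 * k - 2) * B" by (simp add: algebra_simps)
  then show ?thesis using Bpos unfolding k_def by simp
qed


lemma diff_sq:
  fixes v a :: "'a::real_inner"
  shows "(norm (v - t *\<^sub>R a))^2 = (norm v)^2 - 2 * t * (a \<bullet> v) + t^2 * (norm a)^2"
  unfolding power2_norm_eq_inner by (simp add: inner_diff_left inner_diff_right inner_commute power2_eq_square algebra_simps)

lemma cont_Max:
  fixes g :: "nat \<Rightarrow> 'a::topological_space \<Rightarrow> real"
  assumes "finite A" "A \<noteq> {}" "\<And>i. i \<in> A \<Longrightarrow> continuous_on UNIV (g i)"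
  shows "continuous_on UNIV (\<lambda>x. Max ((\<lambda>i. g i x) ` A))"
  using assms
proof (induction A rule: finite_ne_induct)
  case (singleton a) then show ?case by simp
next
  case (insert a F)
  have "(\<lambda>x. Max ((\<lambda>i. g i x) ` insert a F)) = (\<lambda>x. max (g a x) (Max ((\<lambda>i. g i x) ` F)))"
    using insert by (simp add: Max_insert)
  then show ?case using insert by (auto intro!: continuous_on_max)
qed

theorem lemma2p2:
  fixes c :: "nat \<Rightarrow> 'a::euclidean_space" and r :: "nat \<Rightarrow> real" and m :: nat
  assumes "\<And>i. i < m \<Longrightarrow> r i > 0"
    and "\<And>i j. i < m \<Longrightarrow> j < m \<Longrightarrow> cball (c i) (r i) \<inter> cball (c j) (r j) \<noteq> {}"
  shows "(\<Inter>i\<in>{..<m}. cball (c i) (sqrt (2 * real DIM('a) / (real DIM('a) + 1)) * r i)) \<noteq> {}"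
proof (cases "m = 0")
  case True then show ?thesis by simp
next
  case False
  note rpos = assms(1) and inter = assms(2)
  then have m0: "0 < m" using False by simp
  define F where "F x = Max ((\<lambda>i. norm (x - c i) / r i) ` {..<m})" for x
  have Fge: "norm (x - c i) / r i \<le> F x" if "i < m" for x i
    unfolding F_def using that by (intro Max_ge) auto
  have Fless: "F x < t" if "\<And>i. i < m \<Longrightarrow> norm (x - c i) / r i < t" for x t
    unfolding F_def using that m0 by (subst Max_less_iff) auto
  have Fcont: "continuous_on UNIV F"
    unfolding F_def[abs_def] using m0 by (intro cont_Max) (auto intro!: continuous_intros dest: rpos)
  define R where "R = r 0 * F (c 0)"
  obtain x0 where x0K: "x0 \<in> cball (c 0) R" and x0min: "\<And>y. y \<in> cball (c 0) R \<Longrightarrow> F x0 \<le> F y"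
  proof -
    have "c 0 \<in> cball (c 0) R" using Fge[OF m0, of "c 0"] rpos[OF m0] unfolding R_def by simp
    then show ?thesis using continuous_attains_inf[OF compact_cball _ continuous_on_subset[OF Fcont], of "c 0" R] that
      by blast
  qed
  have xmin: "F x0 \<le> F y" for y
  proof (cases "y \<in> cball (c 0) R")
    case True then show ?thesis by (rule x0min)
  next
    case False
    have r0: "r 0 > 0" using rpos m0 by simp
    have "R < norm (y - c 0)" using False by (simp add: dist_norm norm_minus_commute)
    then have "F (c 0) < norm (y - c 0) / r 0" using r0 unfolding R_def by (simp add: field_simps)
    also have "\<dots> \<le> F y" by (rule Fge[OF m0])
    finally have "F (c 0) < F y" .
    moreover have "F x0 \<le> F (c 0)" using x0min[of "c 0"] Fge[OF m0, of "c 0"] r0 unfolding R_def by simp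
    ultimately show ?thesis by simp
  qed
  define l where "l = F x0"
  have nle: "norm (x0 - c i) \<le> l * r i" if "i < m" for i
    using Fge[OF that, of x0] rpos[OF that] unfolding l_def by (simp add: field_simps)
  have l0: "l \<ge> 0" using nle[OF m0] rpos[OF m0] by (smt (verit) norm_ge_zero zero_le_mult_iff)
  define I where "I = {i. i < m \<and> norm (x0 - c i) = l * r i}"
  define g where "g i = (1 / (r i)^2) *\<^sub>R (x0 - c i)" for i
  have finI: "finite I" unfolding I_def by simp
  have zero_hull: "0 \<in> convex hull (g ` I)"
  proof (rule ccontr)
    assume nz: "0 \<notin> convex hull (g ` I)"
    obtain a b where a0: "a \<noteq> 0" and b0: "0 < b" and ab: "\<And>z. z \<in> convex hull (g ` I) \<Longrightarrow> a \<bullet> z > b"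
      using separating_hyperplane_closed_0[OF convex_convex_hull
          compact_imp_closed[OF finite_imp_compact_convex_hull[OF finite_imageI[OF finI]]] nz] by blast
    have agI: "a \<bullet> g i > b" if "i \<in> I" for i
      using ab[OF hull_inc] that by blast
    have na: "norm a > 0" using a0 by simp
    define e where "e i = (if i \<in> I then 2 * (r i)^2 * b / (norm a)^2 else (l * r i - norm (x0 - c i)) / norm a)" for i
    have epos: "e i > 0" if "i < m" for i
    proof (cases "i \<in> I")
      case True then show ?thesis using rpos[OF that] b0 na unfolding e_def by simp
    next
      case False
      then have "norm (x0 - c i) < l * r i" using nle[OF that] that unfolding I_def by auto
      then show ?thesis using False na unfolding e_def by simp
    qed
    define t where "t = Min (e ` {..<m}) / 2"
    have "0 < Min (e ` {..<m})" using epos m0 by (subst Min_gr_iff) auto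
    then have t0: "t > 0" unfolding t_def by simp
    have te: "t < e i" if "i < m" for i
    proof -
      have "Min (e ` {..<m}) \<le> e i" using that by (intro Min_le) auto
      then show ?thesis using t0 unfolding t_def by simp
    qed
    define x where "x = x0 - t *\<^sub>R a"
    have "F x < l"
    proof (rule Fless)
      fix i assume im: "i < m"
      have ri: "r i > 0" using rpos[OF im] .
      have "norm (x - c i) < l * r i"
      proof (cases "i \<in> I")
        case True
        have eqn: "norm (x0 - c i) = l * r i" using True unfolding I_def by simp
        have "a \<bullet> (x0 - c i) = (r i)^2 * (a \<bullet> g i)" unfolding g_def using ri by simp
        then have ai: "a \<bullet> (x0 - c i) > (r i)^2 * b" using agI[OF True] ri by simp
        have tt: "t * (norm a)^2 < 2 * (r i)^2 * b"
          using te[OF im] True na unfolding e_def by (simp add: field_simps)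
        have "(norm (x - c i))^2 = (norm (x0 - c i))^2 - 2 * t * (a \<bullet> (x0 - c i)) + t^2 * (norm a)^2"
        proof -
          have "x - c i = (x0 - c i) - t *\<^sub>R a" by (simp add: x_def algebra_simps)
          then show ?thesis by (simp only: diff_sq)
        qed
        also have "\<dots> < (l * r i)^2"
        proof -
          have h1: "2 * t * ((r i)^2 * b) < 2 * t * (a \<bullet> (x0 - c i))" using ai t0 by simp
          have "t * (t * (norm a)^2) < t * (2 * (r i)^2 * b)" using tt t0 by simp
          moreover have "t * (t * (norm a)^2) = t^2 * (norm a)^2" by (simp add: power2_eq_square)
          moreover have "t * (2 * (r i)^2 * b) = 2 * t * ((r i)^2 * b)" by simp
          ultimately have h2: "t^2 * (norm a)^2 < 2 * t * ((r i)^2 * b)" by simp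
          show ?thesis unfolding eqn using h1 h2 by linarith
        qed
        finally have sq: "(norm (x - c i))^2 < (l * r i)^2" .
        have "0 \<le> l * r i" using l0 ri by simp
        then show ?thesis using power2_less_imp_less[OF sq] by blast
      next
        case False
        have "norm (x - c i) \<le> norm (x0 - c i) + t * norm a"
        proof -
          have eq: "x - c i = (x0 - c i) - t *\<^sub>R a" by (simp add: x_def algebra_simps)
          have "norm (x - c i) \<le> norm (x0 - c i) + norm (t *\<^sub>R a)"
            unfolding eq by (rule norm_triangle_ineq4)
          also have "norm (t *\<^sub>R a) = t * norm a" using t0 by simp
          finally show ?thesis .
        qed
        also have "\<dots> < l * r i"
        proof -
          have "t < (l * r i - norm (x0 - c i)) / norm a" using te[OF im] False unfolding e_def by simp
          then have "t * norm a < l * r i - norm (x0 - c i)" using na by (simp add: pos_less_divide_eq)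
          then show ?thesis by simp
        qed
        finally show ?thesis .
      qed
      then show "norm (x - c i) / r i < l" using ri by (simp add: field_simps)
    qed
    then show False using xmin[of x] unfolding l_def by simp
  qed
  obtain S where finS: "finite S" and SI: "S \<subseteq> g ` I" and cardS: "card S \<le> DIM('a) + 1"
     and zS: "0 \<in> convex hull S"
    using zero_hull unfolding caratheodory[of "g ` I"] by blast
  obtain w where w0: "\<forall>z\<in>S. 0 \<le> w z" and w1: "sum w S = 1" and wz: "(\<Sum>z\<in>S. w z *\<^sub>R z) = 0"
    using zS unfolding convex_hull_finite[OF finS] by auto
  define J where "J = inv_into I g ` S"
  have injS: "inj_on (inv_into I g) S" using SI by (rule inj_on_inv_into)
  have JI: "J \<subseteq> I" unfolding J_def using SI by (auto intro: inv_into_into)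
  have gJ: "g (inv_into I g z) = z" if "z \<in> S" for z using SI that by (auto intro: f_inv_into_f)
  have reidx: "(\<Sum>j\<in>J. h (g j)) = (\<Sum>z\<in>S. h z)" for h :: "'a \<Rightarrow> 'b::comm_monoid_add"
    unfolding J_def by (simp add: sum.reindex[OF injS] gJ)
  have finJ: "finite J" unfolding J_def using finS by simp
  have cardJ: "card J = card S" unfolding J_def using card_image[OF injS] .
  have Sne: "S \<noteq> {}" using w1 by auto
  have Jne: "J \<noteq> {}" using Sne unfolding J_def by simp
  have Jm: "j < m" if "j \<in> J" for j using JI that unfolding I_def by auto
  define \<beta> where "\<beta> j = w (g j) / (r j)^2" for j
  define u where "u j = c j - x0" for j
  have alg: "real (card J) * l^2 \<le> 2 * real (card J) - 2"
  proof (rule jung_alg[OF finJ Jne, of \<beta> r u])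
    show "\<forall>j\<in>J. 0 \<le> \<beta> j" using w0 gJ unfolding \<beta>_def J_def by auto
    show "\<forall>j\<in>J. 0 < r j" using rpos Jm by auto
    have "(\<Sum>j\<in>J. \<beta> j * (r j)^2) = (\<Sum>j\<in>J. w (g j))"
    proof (intro sum.cong refl)
      fix j assume "j \<in> J"
      then have "r j > 0" using rpos Jm by auto
      then show "\<beta> j * (r j)^2 = w (g j)" unfolding \<beta>_def by simp
    qed
    then show "(\<Sum>j\<in>J. \<beta> j * (r j)^2) = 1" using w1 reidx[of w] by simp
    have "(\<Sum>j\<in>J. \<beta> j *\<^sub>R u j) = (\<Sum>j\<in>J. - (w (g j) *\<^sub>R g j))"
      unfolding \<beta>_def u_def g_def by (intro sum.cong refl) (simp add: algebra_simps)
    also have "\<dots> = - (\<Sum>z\<in>S. w z *\<^sub>R z)" using reidx[of "\<lambda>z. w z *\<^sub>R z"] by (simp add: sum_negf)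
    finally show "(\<Sum>j\<in>J. \<beta> j *\<^sub>R u j) = 0" using wz by simp
    show "\<forall>j\<in>J. norm (u j) = l * r j"
      using JI unfolding I_def u_def by (auto simp: norm_minus_commute)
    show "\<forall>i\<in>J. \<forall>j\<in>J. i \<noteq> j \<longrightarrow> norm (u i - u j) \<le> r i + r j"
    proof (intro ballI impI)
      fix i j assume i: "i \<in> J" and j: "j \<in> J"
      obtain y where y1: "y \<in> cball (c i) (r i)" and y2: "y \<in> cball (c j) (r j)"
        using inter[OF Jm[OF i] Jm[OF j]] by blast
      have "norm (u i - u j) = dist (c i) (c j)" unfolding u_def by (simp add: dist_norm)
      also have "\<dots> \<le> dist (c i) y + dist y (c j)" by (rule dist_triangle)
      also have "\<dots> \<le> r i + r j" using y1 y2 by (simp add: dist_commute)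
      finally show "norm (u i - u j) \<le> r i + r j" .
    qed
  qed
  define d where "d = real DIM('a)"
  define k where "k = real (card J)"
  have k1: "k \<ge> 1" using finJ Jne unfolding k_def by (simp add: Suc_leI card_gt_0_iff)
  have kd: "k \<le> d + 1" using cardS cardJ unfolding k_def d_def by simp
  have "l^2 \<le> (2 * k - 2) / k" using alg k1 unfolding k_def[symmetric] by (simp add: field_simps)
  also have "\<dots> \<le> 2 * d / (d + 1)"
  proof -
    have d0: "d \<ge> 0" unfolding d_def by simp
    have "(2 * k - 2) * (d + 1) \<le> 2 * d * k" using kd by (simp add: algebra_simps)
    then show ?thesis using k1 d0 by (simp add: field_simps)
  qed
  finally have lsq: "l \<le> sqrt (2 * d / (d + 1))" by (rule real_le_rsqrt)
  have "x0 \<in> (\<Inter>i\<in>{..<m}. cball (c i) (sqrt (2 * d / (d + 1)) * r i))"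
  proof
    fix i assume "i \<in> {..<m}"
    then have im: "i < m" by simp
    have "dist (c i) x0 = norm (x0 - c i)" by (simp add: dist_norm norm_minus_commute)
    also have "\<dots> \<le> l * r i" by (rule nle[OF im])
    also have "\<dots> \<le> sqrt (2 * d / (d + 1)) * r i" using lsq rpos[OF im] by (intro mult_right_mono) auto
    finally show "x0 \<in> cball (c i) (sqrt (2 * d / (d + 1)) * r i)" by simp
  qed
  then show ?thesis unfolding d_def by blast
qed

end
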